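(* In the setting described in the context, with probability $1-o(1)$ (as $m\to\infty$), there exists $c\in C$ such that $$\Big(-\frac2c+1\Big)\frac{m}{\sqrt q}\log m\ \le\ h(c)\ \le\ (2c-1)\frac{m}{\sqrt q}\log m.$$
   Context: Two agents $a,b$, $m$ items, unknown utilities $u^a_i,u^b_i\in[0,1]$, additive. For an allocation (partition $(\mathcal{A}_a,\mathcal{A}_b)$ of $[m]$), $\mathrm{Envy}_{a\to b}=\sum_{i\in\mathcal{A}_b}u^a_i-\sum_{i\in\mathcal{A}_a}u^a_i$, $\mathrm{Envy}_{b\to a}=\sum_{i\in\mathcal{A}_a}u^b_i-\sum_{i\in\mathcal{A}_b}u^b_i$, $\mathrm{Envy}=\max$ of the two; assume $\min_{\mathcal{A}}\mathrm{Envy}(\mathcal{A})\le-\Delta$, with $\Delta=\Delta(m)$, $\Delta\ge m^{1/4}\log^2m$, $\Delta=o(m/\log m)$. Noise variance is $\sigma^2=1$ and $q=m\lceil15\frac{m^{3/2}}{\Delta^2}\log m+\log^2m\rceil$. Each item $i$ is queried $q/m$ times, each query returning independent $y^a\sim N(u^a_i,1)$, $y^b\sim N(u^b_i,1)$, and $v^\nu_i$ is the average of agent $\nu$'s observations for item $i$ (so $v^\nu_i\sim N(u^\nu_i,m/q)$, all independent). For $c>0$, $x_i(c)=1$ if $cv^a_i>v^b_i$ and $x_i(c)=-1$ otherwise; $e'_a(c)=-\sum_ix_i(c)v^a_i$, $e'_b(c)=\sum_ix_i(c)v^b_i$; $h(c)=\frac1{1+c}\big(e'_a(c)-ce'_b(c)\big)$.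 $C=\{k/m^3:k=1,2,\dots,m^6\}$. $\log$ is natural. *)

theory Defs
  imports "HOL-Probability.Probability" "HOL-Library.Landau_Symbols"
begin

definition nq :: "nat \<Rightarrow> real \<Rightarrow> nat" where
  "nq m D = m * nat \<lceil>15 * real m powr (3/2) / D\<^sup>2 * ln (real m) + (ln (real m))\<^sup>2\<rceil>"

text \<open>Envy of an allocation: agent a gets A, agent b gets the rest of {..<m}.\<close>
definition envy :: "nat \<Rightarrow> (nat \<Rightarrow> real) \<Rightarrow> (nat \<Rightarrow> real) \<Rightarrow> nat set \<Rightarrow> real" where
  "envy m ua ub A = max
     ((\<Sum>i\<in>{..<m} - A. ua i) - (\<Sum>i\<in>A. ua i))
     ((\<Sum>i\<in>A. ub i) - (\<Sum>i\<in>{..<m} - A. ub i))"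

text \<open>Probability space of the averaged observations: \<omega> (True, i) = v^a_i, \<omega> (False, i) = v^b_i,
  all independent, v^nu_i ~ N(u^nu_i, var) with standard deviation sd = sqrt var.\<close>
definition obs_space :: "nat \<Rightarrow> (nat \<Rightarrow> real) \<Rightarrow> (nat \<Rightarrow> real) \<Rightarrow> real \<Rightarrow> (bool \<times> nat \<Rightarrow> real) measure" where
  "obs_space m ua ub sd = PiM (UNIV \<times> {..<m})
     (\<lambda>(\<nu>, i). density lborel (normal_density (if \<nu> then ua i else ub i) sd))"

definition xsgn :: "(nat \<Rightarrow> real) \<Rightarrow> (nat \<Rightarrow> real) \<Rightarrow> real \<Rightarrow> nat \<Rightarrow> real" where
  "xsgn va vb c i = (if c * va i > vb i then 1 else -1)"

definition ea' :: "nat \<Rightarrow> (nat \<Rightarrow> real) \<Rightarrow> (nat \<Rightarrow> real) \<Rightarrow> real \<Rightarrow> real" where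
  "ea' m va vb c = - (\<Sum>i<m. xsgn va vb c i * va i)"

definition eb' :: "nat \<Rightarrow> (nat \<Rightarrow> real) \<Rightarrow> (nat \<Rightarrow> real) \<Rightarrow> real \<Rightarrow> real" where
  "eb' m va vb c = (\<Sum>i<m. xsgn va vb c i * vb i)"

definition hfun :: "nat \<Rightarrow> (nat \<Rightarrow> real) \<Rightarrow> (nat \<Rightarrow> real) \<Rightarrow> real \<Rightarrow> real" where
  "hfun m va vb c = (ea' m va vb c - c * eb' m va vb c) / (1 + c)"

definition Cgrid :: "nat \<Rightarrow> real set" where
  "Cgrid m = {real k / real m ^ 3 | k. 1 \<le> k \<and> k \<le> m ^ 6}"

definition good_event :: "nat \<Rightarrow> real \<Rightarrow> (bool \<times> nat \<Rightarrow> real) set" where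
  "good_event m q = {\<omega>. \<exists>c\<in>Cgrid m.
      (- 2 / c + 1) * (real m / sqrt q) * ln (real m) \<le> hfun m (\<lambda>i. \<omega> (True, i)) (\<lambda>i. \<omega> (False, i)) c
    \<and> hfun m (\<lambda>i. \<omega> (True, i)) (\<lambda>i. \<omega> (False, i)) c \<le> (2 * c - 1) * (real m / sqrt q) * ln (real m)}"

end

theory Submission
  imports Defs "HOL-Real_Asymp.Real_Asymp"
begin

lemma normal_density_le:
  assumes "0 < \<sigma>"
  shows "normal_density \<mu> \<sigma> y \<le> 1 / \<sigma>"
proof -
  have "sqrt (2 * pi * \<sigma>\<^sup>2) = sqrt (2*pi) * \<sigma>" using assms by (simp add: real_sqrt_mult)
  moreover have "sqrt (2*pi) \<ge> 1" using pi_gt3 by simp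
  ultimately have "sqrt (2 * pi * \<sigma>\<^sup>2) \<ge> \<sigma>" using assms by (metis mult_le_cancel_right1 less_le_not_le)
  then have a: "1 / sqrt (2 * pi * \<sigma>\<^sup>2) \<le> 1 / \<sigma>" using assms by (simp add: frac_le)
  have "exp (-(y - \<mu>)\<^sup>2/ (2 * \<sigma>\<^sup>2)) \<le> 1" by simp
  then show ?thesis unfolding normal_density_def
    using a mult_mono[OF a \<open>exp (-(y - \<mu>)\<^sup>2/ (2 * \<sigma>\<^sup>2)) \<le> 1\<close>] assms by simp
qed

lemma nd_int1:
  assumes "0 < \<sigma>"
  shows "(\<integral>\<^sup>+ y. ennreal (normal_density \<mu> \<sigma> y) \<partial>lborel) = 1"
  using assms by (simp add: nn_integral_eq_integral normal_density_nonneg)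

lemma interval_prob:
  assumes "0 < \<sigma>" "0 \<le> r"
  shows "(\<integral>\<^sup>+ y. indicator {y. \<bar>y - a\<bar> \<le> r} y \<partial>density lborel (normal_density \<mu> \<sigma>)) \<le> ennreal (2*r/\<sigma>)"
proof -
  have eq: "{y. \<bar>y - a\<bar> \<le> r} = {a-r..a+r}" by auto
  have "(\<integral>\<^sup>+ y. indicator {y. \<bar>y - a\<bar> \<le> r} y \<partial>density lborel (normal_density \<mu> \<sigma>))
      = (\<integral>\<^sup>+ y. ennreal (normal_density \<mu> \<sigma> y) * indicator {a-r..a+r} y \<partial>lborel)"
    unfolding eq by (subst nn_integral_density) auto
  also have "\<dots> \<le> (\<integral>\<^sup>+ y. ennreal (1/\<sigma>) * indicator {a-r..a+r} y \<partial>lborel)"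
    apply (rule nn_integral_mono)
    using normal_density_le[OF assms(1)]
    by (auto intro!: mult_right_mono ennreal_leI simp: indicator_def)
  also have "\<dots> = ennreal (1/\<sigma>) * ennreal (2*r)"
    using assms by (subst nn_integral_cmult) auto
  also have "\<dots> = ennreal (2*r/\<sigma>)"
    using assms by (simp add: ennreal_mult'[symmetric])
  finally show ?thesis .
qed

lemma nd_shift:
  assumes "0 < \<sigma>"
  shows "normal_density \<mu> \<sigma> y * exp (s*(y-\<mu>)) = exp (s\<^sup>2*\<sigma>\<^sup>2/2) * normal_density (\<mu> + s*\<sigma>\<^sup>2) \<sigma> y"
proof -
  have "-(y - \<mu>)\<^sup>2/ (2 * \<sigma>\<^sup>2) + s*(y-\<mu>) = s\<^sup>2*\<sigma>\<^sup>2/2 + (-(y - (\<mu> + s*\<sigma>\<^sup>2))\<^sup>2/ (2 * \<sigma>\<^sup>2))"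
    using assms by (simp add: field_simps power2_eq_square)
  then have "exp (-(y - \<mu>)\<^sup>2/ (2 * \<sigma>\<^sup>2)) * exp (s*(y-\<mu>)) = exp (s\<^sup>2*\<sigma>\<^sup>2/2) * exp (-(y - (\<mu> + s*\<sigma>\<^sup>2))\<^sup>2/ (2 * \<sigma>\<^sup>2))"
    by (metis exp_add)
  then show ?thesis unfolding normal_density_def by (simp add: ac_simps)
qed

lemma mgf_bound:
  assumes "0 < \<sigma>"
  shows "(\<integral>\<^sup>+ y. ennreal (normal_density \<mu> \<sigma> y * exp (s*(y-\<mu>) - s*t)) \<partial>lborel) = ennreal (exp (s\<^sup>2*\<sigma>\<^sup>2/2 - s*t))"
proof -
  have "(\<integral>\<^sup>+ y. ennreal (normal_density \<mu> \<sigma> y * exp (s*(y-\<mu>) - s*t)) \<partial>lborel)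
     = (\<integral>\<^sup>+ y. ennreal (exp (s\<^sup>2*\<sigma>\<^sup>2/2 - s*t)) * ennreal (normal_density (\<mu> + s*\<sigma>\<^sup>2) \<sigma> y) \<partial>lborel)"
  proof (rule nn_integral_cong)
    fix y
    have "normal_density \<mu> \<sigma> y * exp (s*(y-\<mu>) - s*t) = normal_density \<mu> \<sigma> y * exp (s*(y-\<mu>)) * exp (- s*t)"
      by (simp add: exp_diff exp_minus field_simps exp_add)
    also have "\<dots> = exp (s\<^sup>2*\<sigma>\<^sup>2/2 - s*t) * normal_density (\<mu> + s*\<sigma>\<^sup>2) \<sigma> y"
    proof -
      have "exp (s\<^sup>2*\<sigma>\<^sup>2/2 - s*t) = exp(s\<^sup>2*\<sigma>\<^sup>2/2) * exp(-s*t)" by (simp add: exp_add[symmetric])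
      then show ?thesis by (simp add: nd_shift[OF assms] mult_ac)
    qed
    finally show "ennreal (normal_density \<mu> \<sigma> y * exp (s*(y-\<mu>) - s*t)) = ennreal (exp (s\<^sup>2*\<sigma>\<^sup>2/2 - s*t)) * ennreal (normal_density (\<mu> + s*\<sigma>\<^sup>2) \<sigma> y)"
      by (simp add: ennreal_mult')
  qed
  also have "\<dots> = ennreal (exp (s\<^sup>2*\<sigma>\<^sup>2/2 - s*t))"
    by (subst nn_integral_cmult) (auto simp: nd_int1[OF assms])
  finally show ?thesis .
qed

lemma tail_prob:
  assumes "0 < \<sigma>" "0 \<le> t"
  shows "emeasure (density lborel (normal_density \<mu> \<sigma>)) {y. t < \<bar>y - \<mu>\<bar>} \<le> ennreal (2*exp (-t\<^sup>2/(2*\<sigma>\<^sup>2)))"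
proof -
  define s where "s = t/\<sigma>\<^sup>2"
  have e: "s\<^sup>2*\<sigma>\<^sup>2/2 - s*t = -t\<^sup>2/(2*\<sigma>\<^sup>2)" "(-s)\<^sup>2*\<sigma>\<^sup>2/2 - (-s)*(-t) = -t\<^sup>2/(2*\<sigma>\<^sup>2)"
    using assms unfolding s_def by (simp_all add: field_simps power2_eq_square)
  have "emeasure (density lborel (normal_density \<mu> \<sigma>)) {y. t < \<bar>y - \<mu>\<bar>}
     = (\<integral>\<^sup>+ y. ennreal (normal_density \<mu> \<sigma> y) * indicator {y. t < \<bar>y - \<mu>\<bar>} y \<partial>lborel)"
    by (subst emeasure_density) auto
  also have "\<dots> \<le> (\<integral>\<^sup>+ y. ennreal (normal_density \<mu> \<sigma> y * exp (s*(y-\<mu>) - s*t))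
                + ennreal (normal_density \<mu> \<sigma> y * exp ((-s)*(y-\<mu>) - (-s)*(-t))) \<partial>lborel)"
  proof (rule nn_integral_mono)
    fix y
    have s0: "0 \<le> s" using assms unfolding s_def by simp
    show "ennreal (normal_density \<mu> \<sigma> y) * indicator {y. t < \<bar>y - \<mu>\<bar>} y
        \<le> ennreal (normal_density \<mu> \<sigma> y * exp (s*(y-\<mu>) - s*t))
                + ennreal (normal_density \<mu> \<sigma> y * exp ((-s)*(y-\<mu>) - (-s)*(-t)))"
    proof (cases "t < \<bar>y - \<mu>\<bar>")
      case True
      have "1 \<le> exp (s*(y-\<mu>) - s*t) + exp ((-s)*(y-\<mu>) - (-s)*(-t))"
      proof (cases "y - \<mu> \<ge> 0")
        case True
        then have "s*(y-\<mu>) - s*t \<ge> 0" using \<open>t < \<bar>y - \<mu>\<bar>\<close> s0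
          by (simp add: mult_left_mono right_diff_distrib'[symmetric])
        then show ?thesis by (meson add_increasing2 exp_ge_zero one_le_exp_iff)
      next
        case False
        then have "s*t \<le> s*(\<mu> - y)" using \<open>t < \<bar>y - \<mu>\<bar>\<close> s0
          by (simp add: mult_left_mono)
        then have "(-s)*(y-\<mu>) - (-s)*(-t) \<ge> 0" by (simp add: algebra_simps)
        then show ?thesis by (meson add_increasing exp_ge_zero one_le_exp_iff)
      qed
      then have "normal_density \<mu> \<sigma> y \<le> normal_density \<mu> \<sigma> y * exp (s*(y-\<mu>) - s*t) + normal_density \<mu> \<sigma> y * exp ((-s)*(y-\<mu>) - (-s)*(-t))"
        by (metis distrib_left mult.right_neutral mult_left_mono normal_density_nonneg)
      then show ?thesis using True
        by (simp add: ennreal_plus[symmetric] del: ennreal_plus)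
    qed simp
  qed
  also have "\<dots> = (\<integral>\<^sup>+ y. ennreal (normal_density \<mu> \<sigma> y * exp (s*(y-\<mu>) - s*t)) \<partial>lborel)
         + (\<integral>\<^sup>+ y. ennreal (normal_density \<mu> \<sigma> y * exp ((-s)*(y-\<mu>) - (-s)*(-t))) \<partial>lborel)"
    by (rule nn_integral_add) auto
  also have "\<dots> = ennreal (exp (-t\<^sup>2/(2*\<sigma>\<^sup>2))) + ennreal (exp (-t\<^sup>2/(2*\<sigma>\<^sup>2)))"
    unfolding mgf_bound[OF assms(1)] e ..
  also have "\<dots> = ennreal (2*exp (-t\<^sup>2/(2*\<sigma>\<^sup>2)))"
    by (simp add: ennreal_plus[symmetric] del: ennreal_plus)
  finally show ?thesis .
qed

lemma meas_comp:
  assumes "p \<in> I"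
  shows "(\<lambda>\<omega>. \<omega> p) \<in> borel_measurable (PiM I (\<lambda>p. density lborel (normal_density (\<mu> p) \<sigma>)))"
proof -
  let ?M = "PiM I (\<lambda>p. density lborel (normal_density (\<mu> p) \<sigma>))"
  have e: "measurable ?M (density lborel (normal_density (\<mu> p) \<sigma>)) = measurable ?M borel"
    by (rule measurable_cong_sets) auto
  show ?thesis
    using measurable_component_singleton[OF assms, of "(\<lambda>p. density lborel (normal_density (\<mu> p) \<sigma>))"]
    unfolding e .
qed

lemma meas_E:
  assumes "(False,i) \<in> I" "(True,i) \<in> I"
  shows "(\<lambda>\<omega>. indicator {\<omega>. \<bar>\<omega> (False,i) - c * \<omega> (True,i)\<bar> \<le> r} \<omega> :: ennreal) \<in> borel_measurable (PiM I (\<lambda>p. density lborel (normal_density (\<mu> p) \<sigma>)))"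
proof -
  let ?M = "PiM I (\<lambda>p. density lborel (normal_density (\<mu> p) \<sigma>))"
  have g: "(\<lambda>\<omega>. \<omega> (False,i) - c * \<omega> (True,i)) \<in> borel_measurable ?M"
    using meas_comp[OF assms(1)] meas_comp[OF assms(2)] by (intro borel_measurable_diff borel_measurable_times) auto
  have s: "{x::real. \<bar>x\<bar> \<le> r} \<in> sets borel" by measurable
  have "(\<lambda>x::real. indicator {x::real. \<bar>x\<bar> \<le> r} x :: ennreal) \<in> borel_measurable borel"
    using s by (rule borel_measurable_indicator)
  from measurable_comp[OF g this] show ?thesis by (simp add: comp_def indicator_def)
qed

lemma cross_prod:
  fixes \<mu> :: "bool \<times> nat \<Rightarrow> real"
  assumes sig: "0 < \<sigma>" and r: "0 \<le> r" and S: "finite S"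
  shows "finite I \<Longrightarrow> (\<forall>i\<in>S. (True,i) \<in> I \<and> (False,i) \<in> I) \<Longrightarrow>
    (\<integral>\<^sup>+\<omega>. (\<Prod>i\<in>S. indicator {\<omega>. \<bar>\<omega> (False,i) - c * \<omega> (True,i)\<bar> \<le> r} \<omega> :: ennreal)
       \<partial>PiM I (\<lambda>p. density lborel (normal_density (\<mu> p) \<sigma>))) \<le> ennreal (2*r/\<sigma>) ^ card S"
  using S
proof (induction S arbitrary: I rule: finite_induct)
  case empty
  interpret prob_space "PiM I (\<lambda>p. density lborel (normal_density (\<mu> p) \<sigma>))"
    by (rule prob_space_PiM) (simp add: prob_space_normal_density sig)
  show ?case by (simp add: emeasure_space_1)
next
  case (insert i0 S)
  let ?N = "\<lambda>p. density lborel (normal_density (\<mu> p) \<sigma>)"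
  let ?E = "\<lambda>i. {\<omega>. \<bar>\<omega> (False,i) - c * \<omega> (True,i)\<bar> \<le> r}"
  define j where "j = (False, i0)"
  define I' where "I' = I - {j}"
  have jI: "j \<in> I" using insert.prems unfolding j_def by auto
  have II: "I = insert j I'" "j \<notin> I'" "finite I'" using jI insert.prems unfolding I'_def by auto
  interpret product_sigma_finite ?N
    unfolding product_sigma_finite_def
    by (auto intro!: prob_space_imp_sigma_finite prob_space_normal_density sig)
  have meas: "(\<lambda>\<omega>. (\<Prod>i\<in>insert i0 S. indicator (?E i) \<omega> :: ennreal)) \<in> borel_measurable (PiM (insert j I') ?N)"
    apply (rule borel_measurable_prod_ennreal)
    apply (rule meas_E)
    using insert.prems II(1) by auto
  have "(\<integral>\<^sup>+\<omega>. (\<Prod>i\<in>insert i0 S. indicator (?E i) \<omega> :: ennreal) \<partial>PiM I ?N)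
      = (\<integral>\<^sup>+ x. (\<integral>\<^sup>+ y. (\<Prod>i\<in>insert i0 S. indicator (?E i) (x(j := y)) :: ennreal) \<partial>(?N j)) \<partial>(PiM I' ?N))"
    unfolding II(1) by (rule product_nn_integral_insert[OF II(3) II(2) meas])
  also have "\<dots> \<le> (\<integral>\<^sup>+ x. ennreal (2*r/\<sigma>) * (\<Prod>i\<in>S. indicator (?E i) x :: ennreal) \<partial>(PiM I' ?N))"
  proof (rule nn_integral_mono)
    fix x :: "bool \<times> nat \<Rightarrow> real"
    have a: "(\<Prod>i\<in>S. indicator (?E i) (x(j := y)) :: ennreal) = (\<Prod>i\<in>S. indicator (?E i) x)" for y
      apply (rule prod.cong[OF refl])
      using insert.hyps unfolding j_def by (auto simp: indicator_def)
    have b: "(indicator (?E i0) (x(j := y)) :: ennreal) = indicator {y. \<bar>y - c * x (True,i0)\<bar> \<le> r} y" for y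
      unfolding j_def by (auto simp: indicator_def)
    have "(\<integral>\<^sup>+ y. (\<Prod>i\<in>insert i0 S. indicator (?E i) (x(j := y)) :: ennreal) \<partial>(?N j))
       = (\<integral>\<^sup>+ y. indicator {y. \<bar>y - c * x (True,i0)\<bar> \<le> r} y * (\<Prod>i\<in>S. indicator (?E i) x :: ennreal) \<partial>(?N j))"
      using insert.hyps by (simp add: a b)
    also have "\<dots> = (\<integral>\<^sup>+ y. indicator {y. \<bar>y - c * x (True,i0)\<bar> \<le> r} y \<partial>(?N j)) * (\<Prod>i\<in>S. indicator (?E i) x :: ennreal)"
      by (rule nn_integral_multc) auto
    also have "\<dots> \<le> ennreal (2*r/\<sigma>) * (\<Prod>i\<in>S. indicator (?E i) x :: ennreal)"
      by (rule mult_right_mono[OF interval_prob[OF sig r]]) simp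
    finally show "(\<integral>\<^sup>+ y. (\<Prod>i\<in>insert i0 S. indicator (?E i) (x(j := y)) :: ennreal) \<partial>(?N j))
       \<le> ennreal (2*r/\<sigma>) * (\<Prod>i\<in>S. indicator (?E i) x :: ennreal)" .
  qed
  also have "\<dots> = ennreal (2*r/\<sigma>) * (\<integral>\<^sup>+ x. (\<Prod>i\<in>S. indicator (?E i) x :: ennreal) \<partial>(PiM I' ?N))"
    apply (rule nn_integral_cmult)
    apply (rule borel_measurable_prod_ennreal)
    apply (rule meas_E)
    using insert.prems insert.hyps unfolding I'_def j_def by auto
  also have "\<dots> \<le> ennreal (2*r/\<sigma>) * ennreal (2*r/\<sigma>) ^ card S"
    apply (rule mult_left_mono[OF insert.IH[OF II(3)]])
    using insert.prems insert.hyps unfolding I'_def j_def by auto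
  also have "\<dots> = ennreal (2*r/\<sigma>) ^ card (insert i0 S)"
    using insert.hyps by simp
  finally show ?case .
qed

lemma h_eq:
  assumes "0 < c"
  shows "hfun m va vb c = - (\<Sum>i<m. xsgn va vb c i * ((va i + c * vb i) / (1 + c)))"
proof -
  have "ea' m va vb c - c * eb' m va vb c = - (\<Sum>i<m. xsgn va vb c i * (va i + c * vb i))"
    unfolding ea'_def eb'_def by (simp add: sum_distrib_left distrib_left sum.distrib algebra_simps)
  moreover have "(\<Sum>i<m. xsgn va vb c i * (va i + c * vb i)) / (1 + c) = (\<Sum>i<m. xsgn va vb c i * (va i + c * vb i) / (1 + c))"
    by (rule sum_divide_distrib)
  ultimately show ?thesis unfolding hfun_def by simp
qed

lemma xsgn_cases: "xsgn va vb c i = 1 \<or> xsgn va vb c i = -1"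
  unfolding xsgn_def by auto

lemma h_bound:
  assumes "0 < c" and bnd: "\<forall>i<m. \<bar>va i\<bar> \<le> 2 \<and> \<bar>vb i\<bar> \<le> 2"
  shows "\<bar>hfun m va vb c\<bar> \<le> 2 * m"
proof -
  have "\<bar>xsgn va vb c i * ((va i + c * vb i) / (1 + c))\<bar> \<le> 2" if "i < m" for i
  proof -
    have "\<bar>va i + c * vb i\<bar> \<le> \<bar>va i\<bar> + c * \<bar>vb i\<bar>"
      using abs_triangle_ineq[of "va i" "c * vb i"] assms(1) by (simp add: abs_mult)
    moreover have "c * \<bar>vb i\<bar> \<le> c * 2" using bnd that assms(1) by (intro mult_left_mono) auto
    moreover have "\<bar>va i\<bar> \<le> 2" using bnd that by auto
    ultimately have "\<bar>va i + c * vb i\<bar> \<le> 2 + c * 2" by linarith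
    then have "\<bar>va i + c * vb i\<bar> \<le> 2 * (1 + c)" by (simp add: algebra_simps)
    moreover have pos: "0 < 1 + c" using assms(1) by simp
    ultimately have "\<bar>va i + c * vb i\<bar> / (1 + c) \<le> 2" unfolding pos_divide_le_eq[OF pos] by (simp add: mult.commute)
    then have "\<bar>(va i + c * vb i) / (1 + c)\<bar> \<le> 2" by (metis abs_div_pos pos)
    then show ?thesis using xsgn_cases[of va vb c i] by (metis abs_minus_cancel mult_1 mult_minus1)
  qed
  then have "\<bar>\<Sum>i<m. xsgn va vb c i * ((va i + c * vb i) / (1 + c))\<bar> \<le> (\<Sum>i<m. 2)"
    using order.trans[OF sum_abs sum_mono[of "{..<m}" "\<lambda>i. \<bar>xsgn va vb c i * ((va i + c * vb i) / (1 + c))\<bar>" "\<lambda>_. 2"]] by auto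
  then show ?thesis unfolding h_eq[OF assms(1)] by simp
qed

lemma term_jump:
  fixes a b c d :: real
  assumes c: "0 < c" and d: "0 < d" and ab: "\<bar>a\<bar> \<le> 2" "\<bar>b\<bar> \<le> 2"
  defines "x \<equiv> (if c * a > b then 1 else -1 :: real)"
  defines "x' \<equiv> (if (c+d) * a > b then 1 else -1 :: real)"
  shows "x' * ((a + (c+d) * b) / (1 + (c+d))) - x * ((a + c * b) / (1 + c))
     \<le> 4 * d + (if \<bar>b - c * a\<bar> \<le> 2 * d then 4 else 0)"
proof -
  define w where "w = (a + c * b) / (1 + c)"
  define w' where "w' = (a + (c+d) * b) / (1 + (c+d))"
  have p1: "0 < 1 + c" and p2: "0 < 1 + (c+d)" using c d by auto
  have weq: "w' - w = d * (b - a) / ((1 + c) * (1 + (c+d)))"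
    unfolding w_def w'_def using p1 p2 by (simp add: field_simps)
  moreover have P1: "(1 + c) * (1 + (c+d)) \<ge> 1"
    using mult_mono[of 1 "1+c" 1 "1+(c+d)"] c d by simp
  moreover have "\<bar>d * (b - a)\<bar> \<le> d * 4"
  proof -
    have "\<bar>b - a\<bar> \<le> 4" using ab by linarith
    then show ?thesis unfolding abs_mult abs_of_pos[OF d] using d by (intro mult_left_mono) auto
  qed
  moreover have Pp: "0 < (1 + c) * (1 + (c+d))" using p1 p2 by simp
  ultimately have ww0: "\<bar>w' - w\<bar> \<le> (d * 4) / ((1 + c) * (1 + (c+d)))"
    unfolding weq abs_div_pos[OF Pp, symmetric] by (intro divide_right_mono) (auto intro: less_imp_le)
  have "d * 4 \<le> d * 4 * ((1 + c) * (1 + (c+d)))"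
    using P1 d mult_left_mono[of 1 "(1 + c) * (1 + (c+d))" "d*4"] by simp
  then have "(d * 4) / ((1 + c) * (1 + (c+d))) \<le> d * 4"
    unfolding pos_divide_le_eq[OF Pp] .
  with ww0 have ww: "\<bar>w' - w\<bar> \<le> 4 * d" by linarith
  have "\<bar>a + c * b\<bar> \<le> \<bar>a\<bar> + c * \<bar>b\<bar>"
    using abs_triangle_ineq[of "a" "c * b"] c by (simp add: abs_mult)
  moreover have "c * \<bar>b\<bar> \<le> c * 2" using ab c by (intro mult_left_mono) auto
  ultimately have "\<bar>a + c * b\<bar> \<le> 2 + c * 2" using ab by linarith
  then have "\<bar>a + c * b\<bar> \<le> 2 * (1 + c)" by (simp add: algebra_simps)
  then have "\<bar>a + c * b\<bar> / (1 + c) \<le> 2" unfolding pos_divide_le_eq[OF p1] by (simp add: mult.commute)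
  then have w2: "\<bar>w\<bar> \<le> 2" unfolding w_def by (metis abs_div_pos p1)
  have xx: "\<bar>x'\<bar> = 1" "\<bar>x\<bar> = 1" unfolding x_def x'_def by auto
  have eq: "x' * w' - x * w = x' * (w' - w) + (x' - x) * w" by (simp add: algebra_simps)
  have "\<bar>x' * (w' - w)\<bar> \<le> 4 * d" using ww xx unfolding abs_mult by simp
  then have t1: "x' * (w' - w) \<le> 4 * d" by linarith
  show ?thesis
  proof (cases "x' = x")
    case True
    then show ?thesis using eq t1 unfolding w_def[symmetric] w'_def[symmetric] by simp
  next
    case False
    have "\<bar>b - c * a\<bar> \<le> d * \<bar>a\<bar>"
    proof (cases "c * a > b")
      case True
      then have "\<not> (c+d) * a > b" using False unfolding x_def x'_def by (auto split: if_splits)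
      then have "a < 0" using True d by (smt (verit) distrib_right mult_nonneg_nonneg)
      then show ?thesis using True \<open>\<not> (c+d) * a > b\<close> d by (auto simp: abs_if algebra_simps)
    next
      case F: False
      then have "(c+d) * a > b" using False unfolding x_def x'_def by (auto split: if_splits)
      then have "a > 0" using F d by (smt (verit) distrib_right mult_nonpos_nonneg mult.commute)
      then show ?thesis using F \<open>(c+d) * a > b\<close> d by (auto simp: abs_if algebra_simps)
    qed
    also have "\<dots> \<le> 2 * d" using ab d by (simp add: mult.commute mult_left_mono)
    finally have cr: "\<bar>b - c * a\<bar> \<le> 2 * d" .
    have "\<bar>x' - x\<bar> \<le> 2" unfolding x_def x'_def by auto
    then have "\<bar>(x' - x) * w\<bar> \<le> 2 * 2" unfolding abs_mult using w2 by (intro mult_mono) auto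
    then have "(x' - x) * w \<le> 4" by linarith
    then show ?thesis using eq t1 cr unfolding w_def[symmetric] w'_def[symmetric] by simp
  qed
qed

lemma jump:
  fixes c d :: real
  assumes c: "0 < c" and d: "0 < d" and bnd: "\<forall>i<m. \<bar>va i\<bar> \<le> 2 \<and> \<bar>vb i\<bar> \<le> 2"
  shows "hfun m va vb c - hfun m va vb (c+d) \<le> 4 * real m * d + 4 * real (card {i\<in>{..<m}. \<bar>vb i - c * va i\<bar> \<le> 2 * d})"
proof -
  have cd: "0 < c + d" using c d by simp
  have "hfun m va vb c - hfun m va vb (c+d) =
     (\<Sum>i<m. xsgn va vb (c+d) i * ((va i + (c+d) * vb i) / (1 + (c+d))) - xsgn va vb c i * ((va i + c * vb i) / (1 + c)))"
    unfolding h_eq[OF c] h_eq[OF cd] by (simp add: sum_subtractf)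
  also have "\<dots> \<le> (\<Sum>i<m. 4 * d + (if \<bar>vb i - c * va i\<bar> \<le> 2 * d then 4 else 0))"
    apply (rule sum_mono)
    using term_jump[OF c d] bnd unfolding xsgn_def by auto
  also have "\<dots> = 4 * real m * d + 4 * real (card {i\<in>{..<m}. \<bar>vb i - c * va i\<bar> \<le> 2 * d})"
  proof -
    have "(\<Sum>i<m. (if \<bar>vb i - c * va i\<bar> \<le> 2 * d then 4 else 0 :: real)) = (\<Sum>i\<in>{i\<in>{..<m}. \<bar>vb i - c * va i\<bar> \<le> 2 * d}. 4)"
      using sum.inter_filter[of "{..<m}" "\<lambda>_. 4::real" "\<lambda>i. \<bar>vb i - c * va i\<bar> \<le> 2 * d"] by simp
    then show ?thesis by (simp add: sum.distrib)
  qed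
  finally show ?thesis .
qed

lemma discrete_ivt:
  assumes "P (1::nat)" "\<not> P N" "1 \<le> N"
  shows "\<exists>j. 1 \<le> j \<and> j < N \<and> P j \<and> \<not> P (Suc j)"
proof -
  define j0 where "j0 = (LEAST k. 1 \<le> k \<and> \<not> P k)"
  have ex: "1 \<le> N \<and> \<not> P N" using assms by simp
  have j0: "1 \<le> j0 \<and> \<not> P j0" unfolding j0_def by (rule LeastI[of _ N]) (rule ex)
  have le: "j0 \<le> N" unfolding j0_def by (rule Least_le) (rule ex)
  have "j0 \<noteq> 1" using j0 assms(1) by auto
  then have j2: "j0 \<ge> 2" using j0 by simp
  have "P (j0 - 1)"
  proof (rule ccontr)
    assume "\<not> P (j0 - 1)"
    have lk: "j0 \<le> k" if "1 \<le> k" "\<not> P k" for k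
      unfolding j0_def by (rule Least_le) (use that in auto)
    have "j0 \<le> j0 - 1" using lk[of "j0 - 1"] \<open>\<not> P (j0 - 1)\<close> j2 by simp
    then show False using j2 by simp
  qed
  moreover have "Suc (j0 - 1) = j0" using j2 by simp
  ultimately show ?thesis using j0 j2 le by (intro exI[of _ "j0 - 1"]) auto
qed

lemma core:
  fixes va vb :: "nat \<Rightarrow> real" and m :: nat and K :: real
  assumes m: "m \<ge> 2" and K: "K \<ge> 21"
    and bnd: "\<forall>i<m. \<bar>va i\<bar> \<le> 2 \<and> \<bar>vb i\<bar> \<le> 2"
    and cnt: "\<forall>j\<in>{1..m^6}. card {i\<in>{..<m}. \<bar>vb i - (real j / real m ^ 3) * va i\<bar> \<le> 2 * (1 / real m ^ 3)} < 5"
  shows "\<exists>c\<in>Cgrid m. (-2/c+1)*K \<le> hfun m va vb c \<and> hfun m va vb c \<le> (2*c-1)*K"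
proof (rule ccontr)
  assume nong: "\<not> ?thesis"
  define \<delta> where "\<delta> = 1 / real m ^ 3"
  define C where "C j = real j / real m ^ 3" for j :: nat
  define N where "N = m ^ 6"
  have mpos: "real m \<ge> 2" using m by simp
  have m3: "real m ^ 3 \<ge> 8" using power_mono[OF mpos, of 3] by simp
  have m3m: "real m ^ 3 \<ge> 4 * real m"
  proof -
    have m2: "real m ^ 2 \<ge> 4" using power_mono[OF mpos, of 2] by simp
    have "real m * 4 \<le> real m * real m ^ 2" using mult_left_mono[OF m2, of "real m"] by simp
    moreover have "real m ^ 3 = real m * real m ^ 2" by (simp add: power3_eq_cube power2_eq_square)
    ultimately show ?thesis by simp
  qed
  have dpos: "0 < \<delta>" unfolding \<delta>_def using m3 m by simp
  have dle: "\<delta> \<le> 1/8" unfolding \<delta>_def using m3 by (simp add: divide_le_eq)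
  have mdle: "real m * \<delta> \<le> 1/4"
  proof -
    have "real m * real m \<le> real m ^ 3"
      using mpos by (simp add: power3_eq_cube mult_le_cancel_left1 mult.assoc)
    have "real m ^ 3 = real m * (real m * real m)" by (simp add: power3_eq_cube)
    then have "real m * \<delta> = 1 / (real m * real m)" unfolding \<delta>_def using mpos by simp
    moreover have "real m * real m \<ge> 4" using mult_mono[OF mpos mpos] by simp
    ultimately show ?thesis by (simp add: divide_le_eq)
  qed
  have Cpos: "0 < C j" if "1 \<le> j" for j unfolding C_def using that m3 m by (intro divide_pos_pos) auto
  have Cgrid: "C j \<in> Cgrid m" if "1 \<le> j" "j \<le> N" for j
    unfolding Cgrid_def C_def mem_Collect_eq using that[unfolded N_def] by (intro exI[of _ j]) simp
  have CSuc: "C (Suc j) = C j + \<delta>" for j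
    unfolding C_def \<delta>_def by (simp add: add_divide_distrib)
  have notgood: "hfun m va vb (C j) < (-2/C j+1)*K \<or> hfun m va vb (C j) > (2*C j-1)*K"
    if "1 \<le> j" "j \<le> N" for j
    using nong Cgrid[OF that] by force
  have hb: "\<bar>hfun m va vb (C j)\<bar> \<le> 2 * m" if "1 \<le> j" for j
    using h_bound[OF Cpos[OF that] bnd] .
  define P where "P j = (hfun m va vb (C j) > (2*C j-1)*K)" for j
  have N1: "1 \<le> N" unfolding N_def using m by simp
  have P1: "P 1"
  proof -
    have "C 1 = 1 / real m ^ 3" unfolding C_def by simp
    then have "-2 / C 1 + 1 = 1 - 2 * real m ^ 3" using m3 by simp
    then have "(-2 / C 1 + 1) * K \<le> (1 - 2 * real m ^ 3)"
      using K m3 by (simp add: mult_le_cancel_left1 mult_le_cancel_right1)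
    also have "\<dots> \<le> - 2 * real m" using m3m m3 by linarith
    also have "\<dots> \<le> hfun m va vb (C 1)" using hb[of 1] by simp
    finally show ?thesis using notgood[OF _ N1] unfolding P_def by force
  qed
  have PN: "\<not> P N"
  proof -
    have "C N = real m ^ 3" unfolding C_def N_def
    proof -
      have "real m ^ (6 - 3) = real m ^ 6 / real m ^ 3" by (rule power_diff) (use mpos in auto)
      then show "real (m ^ 6) / real m ^ 3 = real m ^ 3" by simp
    qed
    then have "(2 * C N - 1) * K \<ge> 2 * real m ^ 3 - 1"
      using K m3 by (simp add: mult_le_cancel_left1)
    moreover have "2 * real m ^ 3 - 1 \<ge> 2 * real m" using m3m m3 by linarith
    moreover have "hfun m va vb (C N) \<le> 2 * real m" using hb[OF N1] by simp
    ultimately show ?thesis unfolding P_def by simp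
  qed
  obtain j where j: "1 \<le> j" "j < N" "P j" "\<not> P (Suc j)"
    using discrete_ivt[of P N, OF P1 PN N1] by blast
  define c where "c = C j"
  have c: "0 < c" unfolding c_def using Cpos[OF j(1)] .
  have low: "hfun m va vb (c + \<delta>) < (-2/(c+\<delta>)+1)*K"
    using notgood[of "Suc j"] j unfolding P_def c_def CSuc by simp
  have up: "hfun m va vb c > (2*c-1)*K" using j(3) unfolding P_def c_def .
  have "card {i\<in>{..<m}. \<bar>vb i - c * va i\<bar> \<le> 2 * \<delta>} < 5"
    using cnt j unfolding c_def C_def \<delta>_def N_def by simp
  then have cnt4: "real (card {i\<in>{..<m}. \<bar>vb i - c * va i\<bar> \<le> 2 * \<delta>}) \<le> 4" by simp
  have "hfun m va vb c - hfun m va vb (c + \<delta>) \<le> 4 * real m * \<delta> + 4 * real (card {i\<in>{..<m}. \<bar>vb i - c * va i\<bar> \<le> 2 * \<delta>})"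
    by (rule jump[OF c dpos bnd])
  also have "\<dots> \<le> 17" using mdle cnt4 by simp
  finally have J: "hfun m va vb c - hfun m va vb (c + \<delta>) \<le> 17" .
  have cd: "0 < c + \<delta>" using c dpos by simp
  have am: "(c + \<delta>) + 1 / (c + \<delta>) \<ge> 2"
  proof -
    have "(c + \<delta> - 1)^2 \<ge> 0" by simp
    then have "(c + \<delta>) * (c + \<delta>) + 1 \<ge> 2 * (c + \<delta>)" by (simp add: power2_eq_square algebra_simps)
    then show ?thesis using cd by (simp add: field_simps)
  qed
  have "2 * c - 2 + 2 / (c + \<delta>) \<ge> 1"
  proof -
    have "2 * c - 2 + 2 / (c + \<delta>) = 2 * ((c + \<delta>) + 1 / (c + \<delta>)) - 2 - 2 * \<delta>" by simp
    then show ?thesis using am dle by linarith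
  qed
  then have "(2 * c - 2 + 2 / (c + \<delta>)) * K \<ge> K" using K by (simp add: mult_le_cancel_right1)
  moreover have "(2*c-1)*K - (-2/(c+\<delta>)+1)*K = (2 * c - 2 + 2 / (c + \<delta>)) * K" by (simp add: algebra_simps)
  ultimately have "hfun m va vb c - hfun m va vb (c + \<delta>) > 21" using low up K by linarith
  then show False using J by simp
qed

lemma prob_bad1:
  fixes \<mu> :: "bool \<times> nat \<Rightarrow> real" and m :: nat
  assumes sig: "0 < \<sigma>" and t: "0 \<le> t"
  defines "Mx \<equiv> PiM (UNIV \<times> {..<m}) (\<lambda>p. density lborel (normal_density (\<mu> p) \<sigma>))"
  defines "B \<equiv> {\<omega>\<in>space Mx. \<exists>p\<in>UNIV \<times> {..<m}. t < \<bar>\<omega> p - \<mu> p\<bar>}"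
  shows "B \<in> sets Mx" "measure Mx B \<le> 2 * real m * (2 * exp (-t\<^sup>2/(2*\<sigma>\<^sup>2)))"
proof -
  let ?N = "\<lambda>p. density lborel (normal_density (\<mu> p) \<sigma>)"
  let ?I = "UNIV \<times> {..<m} :: (bool \<times> nat) set"
  interpret product_prob_space ?N ?I
    unfolding product_prob_space_def product_prob_space_axioms_def product_sigma_finite_def
    by (auto intro!: prob_space_imp_sigma_finite prob_space_normal_density sig)
  interpret PX: prob_space Mx unfolding Mx_def by (rule prob_space_PiM) (simp add: prob_space_normal_density sig)
  define A where "A p = {\<omega>\<in>space Mx. t < \<bar>\<omega> p - \<mu> p\<bar>}" for p
  have Aset: "A p \<in> sets Mx" if "p \<in> ?I" for p
  proof -
    have "(\<lambda>\<omega>. \<omega> p) \<in> borel_measurable Mx" unfolding Mx_def by (rule meas_comp[OF that])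
    then have "(\<lambda>\<omega>. \<bar>\<omega> p - \<mu> p\<bar>) \<in> borel_measurable Mx" by measurable
    then show ?thesis unfolding A_def by measurable
  qed
  have BA: "B = (\<Union>p\<in>?I. A p)" unfolding B_def A_def by auto
  have fin: "finite ?I" by simp
  show Bs: "B \<in> sets Mx" unfolding BA using Aset fin by (intro sets.finite_UN) auto
  have Aem: "emeasure Mx (A p) \<le> ennreal (2 * exp (-t\<^sup>2/(2*\<sigma>\<^sup>2)))" if "p \<in> ?I" for p
  proof -
    have "{y. t < \<bar>y - \<mu> p\<bar>} \<in> sets (?N p)" by simp
    then have "emeasure Mx {x\<in>space Mx. x p \<in> {y. t < \<bar>y - \<mu> p\<bar>}} = emeasure (?N p) {y. t < \<bar>y - \<mu> p\<bar>}"
      unfolding Mx_def by (rule emeasure_PiM_Collect_single[OF that])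
    then have "emeasure Mx (A p) = emeasure (?N p) {y. t < \<bar>y - \<mu> p\<bar>}" unfolding A_def by simp
    also have "\<dots> \<le> ennreal (2 * exp (-t\<^sup>2/(2*\<sigma>\<^sup>2)))" by (rule tail_prob[OF sig t])
    finally show ?thesis .
  qed
  have "emeasure Mx B \<le> (\<Sum>p\<in>?I. emeasure Mx (A p))"
    unfolding BA using Aset by (intro emeasure_subadditive_finite fin) auto
  also have "\<dots> \<le> (\<Sum>p\<in>?I. ennreal (2 * exp (-t\<^sup>2/(2*\<sigma>\<^sup>2))))"
    by (rule sum_mono) (rule Aem)
  also have "\<dots> = ennreal (2 * real m * (2 * exp (-t\<^sup>2/(2*\<sigma>\<^sup>2))))"
    by (simp add: card_cartesian_product ennreal_mult' ennreal_of_nat_eq_real_of_nat mult_ac)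
  finally show "measure Mx B \<le> 2 * real m * (2 * exp (-t\<^sup>2/(2*\<sigma>\<^sup>2)))"
    using PX.emeasure_eq_measure by (simp add: ennreal_le_iff)
qed

lemma prod_indicator_all:
  fixes S :: "'i set"
  assumes "finite S"
  shows "(\<Prod>i\<in>S. indicator (E i) x :: ennreal) = (if \<forall>i\<in>S. x \<in> E i then 1 else 0)"
proof (cases "\<forall>i\<in>S. x \<in> E i")
  case True
  then have "(\<Prod>i\<in>S. indicator (E i) x :: ennreal) = (\<Prod>i\<in>S. 1)" by (intro prod.cong) auto
  then show ?thesis using True by simp
next
  case False
  then obtain i where "i \<in> S" "x \<notin> E i" by auto
  then have "(\<Prod>i\<in>S. indicator (E i) x :: ennreal) = 0" using assms by (intro prod_zero bexI[of _ i]) auto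
  then show ?thesis using False by simp
qed

lemma prob_bad2:
  fixes \<mu> :: "bool \<times> nat \<Rightarrow> real" and m k :: nat and CS :: "real set"
  assumes sig: "0 < \<sigma>" and r: "0 \<le> r" and CS: "finite CS"
  defines "Mx \<equiv> PiM (UNIV \<times> {..<m}) (\<lambda>p. density lborel (normal_density (\<mu> p) \<sigma>))"
  defines "SS \<equiv> {S. S \<subseteq> {..<m} \<and> card S = k}"
  defines "B \<equiv> {\<omega>\<in>space Mx. \<exists>c\<in>CS. \<exists>S\<in>SS. \<forall>i\<in>S. \<bar>\<omega> (False,i) - c * \<omega> (True,i)\<bar> \<le> r}"
  shows "B \<in> sets Mx" "measure Mx B \<le> real (card CS) * real (m choose k) * (2*r/\<sigma>) ^ k"
proof -
  let ?I = "UNIV \<times> {..<m} :: (bool \<times> nat) set"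
  interpret PX: prob_space Mx unfolding Mx_def by (rule prob_space_PiM) (simp add: prob_space_normal_density sig)
  define E where "E c i = {\<omega>::bool \<times> nat \<Rightarrow> real. \<bar>\<omega> (False,i) - c * \<omega> (True,i)\<bar> \<le> r}" for c i
  define A where "A cS = {\<omega>\<in>space Mx. \<forall>i\<in>snd cS. \<omega> \<in> E (fst cS) i}" for cS
  have finSS: "finite SS" unfolding SS_def by (rule finite_subset[of _ "Pow {..<m}"]) auto
  have fin: "finite (CS \<times> SS)" using CS finSS by simp
  have Eset: "{\<omega>\<in>space Mx. \<omega> \<in> E c i} \<in> sets Mx" if "i < m" for c i
  proof -
    have "(\<lambda>\<omega>. \<omega> (False,i)) \<in> borel_measurable Mx" unfolding Mx_def by (rule meas_comp) (use that in auto)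
    moreover have "(\<lambda>\<omega>. \<omega> (True,i)) \<in> borel_measurable Mx" unfolding Mx_def by (rule meas_comp) (use that in auto)
    ultimately have "(\<lambda>\<omega>. \<bar>\<omega> (False,i) - c * \<omega> (True,i)\<bar>) \<in> borel_measurable Mx" by measurable
    then show ?thesis unfolding E_def by measurable
  qed
  have Aset: "A cS \<in> sets Mx" if "cS \<in> CS \<times> SS" for cS
  proof -
    have fS2: "snd cS \<subseteq> {..<m}" using that unfolding SS_def by auto
    then have fS: "finite (snd cS)" "snd cS \<subseteq> {..<m}" using finite_subset[OF fS2] by auto
    show ?thesis unfolding A_def
      by (rule sets.sets_Collect_finite_All[OF _ fS(1)]) (use Eset fS(2) in auto)
  qed
  have BA: "B = (\<Union>cS\<in>CS \<times> SS. A cS)" unfolding B_def A_def E_def by force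
  show "B \<in> sets Mx" unfolding BA using Aset fin by (intro sets.finite_UN) auto
  have Aem: "emeasure Mx (A cS) \<le> ennreal (2*r/\<sigma>) ^ k" if "cS \<in> CS \<times> SS" for cS
  proof -
    obtain c S where cS: "cS = (c, S)" by (cases cS)
    have S12: "S \<subseteq> {..<m}" "card S = k" using that cS unfolding SS_def by auto
    then have S: "S \<subseteq> {..<m}" "card S = k" "finite S" using finite_subset[OF S12(1)] by auto
    have "emeasure Mx (A cS) = (\<integral>\<^sup>+\<omega>. indicator (A cS) \<omega> \<partial>Mx)" using Aset[OF that] by simp
    also have "\<dots> = (\<integral>\<^sup>+\<omega>. (\<Prod>i\<in>S. indicator (E c i) \<omega> :: ennreal) \<partial>Mx)"
      by (rule nn_integral_cong) (simp add: prod_indicator_all[OF S(3)] A_def cS indicator_def S(3))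
    also have "\<dots> \<le> ennreal (2*r/\<sigma>) ^ card S"
      unfolding Mx_def E_def by (rule cross_prod[OF sig r S(3)]) (use S(1) in auto)
    finally show ?thesis using S(2) by simp
  qed
  have "emeasure Mx B \<le> (\<Sum>cS\<in>CS \<times> SS. emeasure Mx (A cS))"
    unfolding BA using Aset by (intro emeasure_subadditive_finite fin) auto
  also have "\<dots> \<le> (\<Sum>cS\<in>CS \<times> SS. ennreal (2*r/\<sigma>) ^ k)"
    by (rule sum_mono) (rule Aem)
  also have "\<dots> = ennreal (real (card CS) * real (m choose k) * (2*r/\<sigma>) ^ k)"
  proof -
    have "card SS = m choose k" unfolding SS_def using n_subsets[of "{..<m}" k] by simp
    then show ?thesis using sig r
      by (simp add: card_cartesian_product ennreal_mult' ennreal_of_nat_eq_real_of_nat mult_ac ennreal_power)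
  qed
  finally show "measure Mx B \<le> real (card CS) * real (m choose k) * (2*r/\<sigma>) ^ k"
    using PX.emeasure_eq_measure sig r by (simp add: ennreal_le_iff)
qed

lemma meas_h:
  fixes \<mu> :: "bool \<times> nat \<Rightarrow> real" and m :: nat and \<sigma> :: real
  defines "Mx \<equiv> PiM (UNIV \<times> {..<m}) (\<lambda>p. density lborel (normal_density (\<mu> p) \<sigma>))"
  shows "(\<lambda>\<omega>. hfun m (\<lambda>i. \<omega> (True, i)) (\<lambda>i. \<omega> (False, i)) c) \<in> borel_measurable Mx"
proof -
  have cT: "(\<lambda>\<omega>. \<omega> (True,i)) \<in> borel_measurable Mx" and cF: "(\<lambda>\<omega>. \<omega> (False,i)) \<in> borel_measurable Mx"
    if "i \<in> {..<m}" for i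
    unfolding Mx_def using that by (auto intro!: meas_comp)
  have xs: "(\<lambda>\<omega>. xsgn (\<lambda>i. \<omega> (True, i)) (\<lambda>i. \<omega> (False, i)) c i) \<in> borel_measurable Mx"
    if "i \<in> {..<m}" for i
  proof -
    note [measurable] = cT[OF that] cF[OF that]
    show ?thesis unfolding xsgn_def by measurable
  qed
  have a: "(\<lambda>\<omega>. ea' m (\<lambda>i. \<omega> (True, i)) (\<lambda>i. \<omega> (False, i)) c) \<in> borel_measurable Mx"
    unfolding ea'_def
    by (intro borel_measurable_uminus borel_measurable_sum borel_measurable_times xs cT)
  have b: "(\<lambda>\<omega>. eb' m (\<lambda>i. \<omega> (True, i)) (\<lambda>i. \<omega> (False, i)) c) \<in> borel_measurable Mx"
    unfolding eb'_def
    by (intro borel_measurable_sum borel_measurable_times xs cF)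
  show ?thesis unfolding hfun_def
    by (intro borel_measurable_divide borel_measurable_diff borel_measurable_times a b borel_measurable_const)
qed

lemma finite_Cgrid: "finite (Cgrid m)"
proof -
  have "Cgrid m = (\<lambda>k. real k / real m ^ 3) ` {1..m^6}" unfolding Cgrid_def by auto
  then show ?thesis by simp
qed

lemma meas_good:
  fixes \<mu> :: "bool \<times> nat \<Rightarrow> real" and m :: nat and \<sigma> :: real
  defines "Mx \<equiv> PiM (UNIV \<times> {..<m}) (\<lambda>p. density lborel (normal_density (\<mu> p) \<sigma>))"
  shows "space Mx \<inter> good_event m q \<in> sets Mx"
proof -
  have eq: "space Mx \<inter> good_event m q = {\<omega>\<in>space Mx. \<exists>c\<in>Cgrid m.
      (- 2 / c + 1) * (real m / sqrt q) * ln (real m) \<le> hfun m (\<lambda>i. \<omega> (True, i)) (\<lambda>i. \<omega> (False, i)) c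
    \<and> hfun m (\<lambda>i. \<omega> (True, i)) (\<lambda>i. \<omega> (False, i)) c \<le> (2 * c - 1) * (real m / sqrt q) * ln (real m)}"
    unfolding good_event_def by auto
  show ?thesis unfolding eq
  proof (rule sets.sets_Collect_finite_Ex[OF _ finite_Cgrid])
    fix c
    note [measurable] = meas_h[where \<mu>=\<mu> and \<sigma>=\<sigma> and m=m and c=c, folded Mx_def]
    show "{\<omega>\<in>space Mx. (- 2 / c + 1) * (real m / sqrt q) * ln (real m) \<le> hfun m (\<lambda>i. \<omega> (True, i)) (\<lambda>i. \<omega> (False, i)) c
    \<and> hfun m (\<lambda>i. \<omega> (True, i)) (\<lambda>i. \<omega> (False, i)) c \<le> (2 * c - 1) * (real m / sqrt q) * ln (real m)} \<in> sets Mx"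
      by measurable
  qed
qed

lemma obs_eq:
  "obs_space m ua ub sd = PiM (UNIV \<times> {..<m})
     (\<lambda>p. density lborel (normal_density ((\<lambda>p. if fst p then ua (snd p) else ub (snd p)) p) sd))"
  unfolding obs_space_def by (intro PiM_cong refl) (auto split: prod.split)

lemma fixed_m:
  fixes ua ub :: "nat \<Rightarrow> real" and m :: nat and q sd :: real
  assumes m: "m \<ge> 2" and sd: "0 < sd"
    and u: "\<forall>i<m. 0 \<le> ua i \<and> ua i \<le> 1 \<and> 0 \<le> ub i \<and> ub i \<le> 1"
    and K: "real m / sqrt q * ln (real m) \<ge> 21"
  shows "measure (obs_space m ua ub sd) (space (obs_space m ua ub sd) \<inter> good_event m q)
     \<ge> 1 - 2 * real m * (2 * exp (-1\<^sup>2/(2 * sd\<^sup>2)))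
         - real (card (Cgrid m)) * real (m choose 5) * (2*(2 * (1 / real m ^ 3))/sd) ^ 5"
proof -
  define \<mu> where "\<mu> = (\<lambda>p. if fst p then ua (snd p) else ub (snd p))"
  define Mx where "Mx = PiM (UNIV \<times> {..<m}) (\<lambda>p. density lborel (normal_density (\<mu> p) sd))"
  have Mx: "obs_space m ua ub sd = Mx" unfolding Mx_def \<mu>_def by (rule obs_eq)
  interpret PX: prob_space Mx unfolding Mx_def by (rule prob_space_PiM) (simp add: prob_space_normal_density sd)
  define r where "r = 2 * (1 / real m ^ 3)"
  have r: "0 \<le> r" unfolding r_def by simp
  define SS where "SS = {S. S \<subseteq> {..<m} \<and> card S = (5::nat)}"
  define B1 where "B1 = {\<omega>\<in>space Mx. \<exists>p\<in>UNIV \<times> {..<m}. 1 < \<bar>\<omega> p - \<mu> p\<bar>}"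
  define B2 where "B2 = {\<omega>\<in>space Mx. \<exists>c\<in>Cgrid m. \<exists>S\<in>SS. \<forall>i\<in>S. \<bar>\<omega> (False,i) - c * \<omega> (True,i)\<bar> \<le> r}"
  have B1: "B1 \<in> sets Mx" "measure Mx B1 \<le> 2 * real m * (2 * exp (-1\<^sup>2/(2 * sd\<^sup>2)))"
    using prob_bad1[OF sd, where t=1 and \<mu>=\<mu> and m=m] unfolding B1_def Mx_def by auto
  have B2: "B2 \<in> sets Mx" "measure Mx B2 \<le> real (card (Cgrid m)) * real (m choose 5) * (2*r/sd) ^ 5"
    using prob_bad2[OF sd r finite_Cgrid, where \<mu>=\<mu> and k=5 and m=m] unfolding B2_def Mx_def SS_def by auto
  have G: "space Mx \<inter> good_event m q \<in> sets Mx" unfolding Mx_def by (rule meas_good)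
  have sub: "space Mx - (B1 \<union> B2) \<subseteq> space Mx \<inter> good_event m q"
  proof
    fix \<omega> assume w: "\<omega> \<in> space Mx - (B1 \<union> B2)"
    define va where "va = (\<lambda>i. \<omega> (True, i))"
    define vb where "vb = (\<lambda>i. \<omega> (False, i))"
    have bnd: "\<forall>i<m. \<bar>va i\<bar> \<le> 2 \<and> \<bar>vb i\<bar> \<le> 2"
    proof (intro allI impI)
      fix i assume i: "i < m"
      have "\<not> 1 < \<bar>\<omega> (True,i) - \<mu> (True,i)\<bar>" "\<not> 1 < \<bar>\<omega> (False,i) - \<mu> (False,i)\<bar>"
        using w i unfolding B1_def by auto
      moreover have "\<mu> (True,i) = ua i" "\<mu> (False,i) = ub i" unfolding \<mu>_def by auto
      ultimately show "\<bar>va i\<bar> \<le> 2 \<and> \<bar>vb i\<bar> \<le> 2" using u i unfolding va_def vb_def by auto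
    qed
    have cnt: "\<forall>j\<in>{1..m^6}. card {i\<in>{..<m}. \<bar>vb i - (real j / real m ^ 3) * va i\<bar> \<le> 2 * (1 / real m ^ 3)} < 5"
    proof (rule ccontr)
      assume "\<not> ?thesis"
      then obtain j where j: "j \<in> {1..m^6}"
        and c5: "5 \<le> card {i\<in>{..<m}. \<bar>vb i - (real j / real m ^ 3) * va i\<bar> \<le> 2 * (1 / real m ^ 3)}"
        by (auto simp: not_less)
      obtain S where S: "S \<subseteq> {i\<in>{..<m}. \<bar>vb i - (real j / real m ^ 3) * va i\<bar> \<le> 2 * (1 / real m ^ 3)}" "card S = 5"
        using obtain_subset_with_card_n[OF c5] by metis
      have "real j / real m ^ 3 \<in> Cgrid m" unfolding Cgrid_def mem_Collect_eq using j by (intro exI[of _ j]) simp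
      moreover have "S \<in> SS" unfolding SS_def using S by auto
      moreover have "\<forall>i\<in>S. \<bar>\<omega> (False,i) - (real j / real m ^ 3) * \<omega> (True,i)\<bar> \<le> r"
        using S(1) unfolding r_def va_def vb_def by auto
      ultimately have "\<omega> \<in> B2" using w unfolding B2_def by blast
      then show False using w by simp
    qed
    have "\<exists>c\<in>Cgrid m. (-2/c+1)*(real m / sqrt q * ln (real m)) \<le> hfun m va vb c \<and> hfun m va vb c \<le> (2*c-1)*(real m / sqrt q * ln (real m))"
      by (rule core[OF m K bnd cnt])
    then have "\<omega> \<in> good_event m q" unfolding good_event_def va_def vb_def by (simp add: mult.assoc)
    then show "\<omega> \<in> space Mx \<inter> good_event m q" using w by simp
  qed
  have "1 - measure Mx B1 - measure Mx B2 \<le> 1 - measure Mx (B1 \<union> B2)"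
    using measure_Un_le[OF B1(1) B2(1)] by simp
  also have "\<dots> = measure Mx (space Mx - (B1 \<union> B2))"
    using PX.prob_compl[of "B1 \<union> B2"] B1(1) B2(1) by simp
  also have "\<dots> \<le> measure Mx (space Mx \<inter> good_event m q)"
    by (rule PX.finite_measure_mono[OF sub G])
  finally show ?thesis unfolding Mx r_def[symmetric] using B1(2) B2(2) by simp
qed

lemma numeric_Q:
  fixes m :: nat and D :: real
  assumes m5: "m \<ge> 5" and L84: "ln (real m) \<ge> 84"
    and F1: "15 * real m / ln (real m) ^ 3 + ln (real m) ^ 2 + 1 \<le> 16 * real m"
    and D: "D \<ge> real m powr (1/4) * (ln (real m))\<^sup>2"
  defines "X \<equiv> 15 * real m powr (3/2) / D\<^sup>2 * ln (real m) + (ln (real m))\<^sup>2"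
  shows "real (nat \<lceil>X\<rceil>) \<ge> (ln (real m))\<^sup>2" "real (nat \<lceil>X\<rceil>) \<le> 16 * real m"
proof -
  define L where "L = ln (real m)"
  have L0: "L > 0" using L84 unfolding L_def by simp
  have mpos: "real m > 0" using m5 by simp
  have t0: "15 * real m powr (3/2) / D\<^sup>2 * L \<ge> 0" using L0 by simp
  have XL: "X \<ge> L\<^sup>2" unfolding X_def L_def[symmetric] using t0 by simp
  have Xc: "real (nat \<lceil>X\<rceil>) = real_of_int \<lceil>X\<rceil>"
  proof -
    have "0 \<le> X" using XL zero_le_power2[of L] by linarith
    then have "0 \<le> \<lceil>X\<rceil>" by simp
    then show ?thesis by (rule of_nat_nat)
  qed
  show "real (nat \<lceil>X\<rceil>) \<ge> (ln (real m))\<^sup>2" unfolding Xc using XL le_of_int_ceiling[of X] unfolding L_def by linarith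
  have m14: "real m powr (1/4) > 0" using mpos by simp
  have "real m powr (1/4) * L\<^sup>2 > 0" using m14 L0 by simp
  then have Dpos: "D > 0" using D unfolding L_def[symmetric] by linarith
  have D2: "D\<^sup>2 \<ge> real m powr (1/2) * L^4"
  proof -
    have "0 \<le> real m powr (1/4) * L\<^sup>2" using m14 by simp
    have DL: "real m powr (1/4) * L\<^sup>2 \<le> D" using D unfolding L_def .
    have "(real m powr (1/4) * L\<^sup>2)\<^sup>2 \<le> D\<^sup>2" by (rule power_mono[OF DL]) fact
    moreover have "(real m powr (1/4) * L\<^sup>2)\<^sup>2 = real m powr (1/2) * L^4"
    proof -
      have "(real m powr (1/4))\<^sup>2 = real m powr (real 2 * (1/4))" by (rule powr_power) (use mpos in simp)
      moreover have e: "real 2 * (1/4::real) = 1/2" by simp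
      ultimately have e2: "(real m powr (1/4))\<^sup>2 = real m powr (1/2)" by (simp only: e)
      have "(L\<^sup>2)\<^sup>2 = L^4" by (simp only: power_mult[symmetric]) simp
      then show ?thesis unfolding power_mult_distrib e2 by simp
    qed
    ultimately show ?thesis by simp
  qed
  have "15 * real m powr (3/2) / D\<^sup>2 * L \<le> 15 * real m powr (3/2) / (real m powr (1/2) * L^4) * L"
  proof -
    have "real m powr (1/2) * L^4 > 0" using mpos L0 by simp
    then have H: "real m powr (3/2) / D\<^sup>2 \<le> real m powr (3/2) / (real m powr (1/2) * L^4)"
      using D2 \<open>real m powr (1/2) * L^4 > 0\<close> m5 by (intro divide_left_mono mult_pos_pos) auto
    show ?thesis using mult_right_mono[OF mult_left_mono[OF H, of 15], of L] L0 by simp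
  qed
  also have "\<dots> = 15 * real m / L^3"
  proof -
    have e: "(3/2::real) = 1/2 + 1" by simp
    have "real m powr (3/2) = real m powr (1/2) * real m powr 1" unfolding e by (rule powr_add)
    then have "real m powr (3/2) = real m powr (1/2) * real m" using mpos by simp
    then have eq1: "real m powr (3/2) / (real m powr (1/2) * L^4) = real m / L^4" using mpos by simp
    have eq2: "15 * (real m / L^4) * L = 15 * real m / L^3" using L0 by (simp add: power_eq_if)
    have "15 * real m powr (3/2) / (real m powr (1/2) * L^4) * L = 15 * (real m powr (3/2) / (real m powr (1/2) * L^4)) * L"
      by simp
    also have "\<dots> = 15 * (real m / L^4) * L" unfolding eq1 ..
    finally show ?thesis unfolding eq2 .
  qed
  finally have "X \<le> 15 * real m / L^3 + L\<^sup>2" unfolding X_def L_def[symmetric] by simp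
  then have "X + 1 \<le> 16 * real m" using F1 unfolding L_def by simp
  then show "real (nat \<lceil>X\<rceil>) \<le> 16 * real m" unfolding Xc
    using of_int_ceiling_le_add_one[of X] by linarith
qed

lemma card_Cgrid: "card (Cgrid m) \<le> m ^ 6"
proof -
  have "Cgrid m = (\<lambda>k. real k / real m ^ 3) ` {1..m^6}" unfolding Cgrid_def by auto
  then have "card (Cgrid m) \<le> card {1..m^6}" using card_image_le[of "{1..m^6}" "\<lambda>k. real k / real m ^ 3"] by simp
  then show ?thesis by simp
qed

lemma per_m:
  fixes ua ub :: "nat \<Rightarrow> real" and m :: nat and D :: real
  assumes m5: "m \<ge> 5" and L84: "ln (real m) \<ge> 84"
    and F1: "15 * real m / ln (real m) ^ 3 + ln (real m) ^ 2 + 1 \<le> 16 * real m"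
    and D: "D \<ge> real m powr (1/4) * (ln (real m))\<^sup>2"
    and u: "\<forall>i<m. 0 \<le> ua i \<and> ua i \<le> 1 \<and> 0 \<le> ub i \<and> ub i \<le> 1"
  shows "1 - 4 * real m * exp (- ((ln (real m))^2) / 2) - real m^11 * (16 * sqrt (real m) / real m^3)^5
     \<le> measure (obs_space m ua ub (sqrt (real m / real (nq m D))))
          (space (obs_space m ua ub (sqrt (real m / real (nq m D)))) \<inter> good_event m (real (nq m D)))
   \<and> measure (obs_space m ua ub (sqrt (real m / real (nq m D))))
          (space (obs_space m ua ub (sqrt (real m / real (nq m D)))) \<inter> good_event m (real (nq m D))) \<le> 1"
proof -
  define L where "L = ln (real m)"
  define Qn where "Qn = nat \<lceil>15 * real m powr (3/2) / D\<^sup>2 * ln (real m) + (ln (real m))\<^sup>2\<rceil>"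
  have QL: "real Qn \<ge> L\<^sup>2" and QU: "real Qn \<le> 16 * real m"
    using numeric_Q[OF m5 L84 F1 D] unfolding Qn_def L_def by auto
  have L0: "L > 0" using L84 unfolding L_def by simp
  have mpos: "real m > 0" using m5 by simp
  have "L\<^sup>2 > 0" using L0 by simp
  then have Qpos: "real Qn > 0" using QL by linarith
  define q where "q = real (nq m D)"
  have q: "q = real m * real Qn" unfolding q_def nq_def Qn_def by simp
  define sd where "sd = sqrt (real m / q)"
  have sdq: "sd = 1 / sqrt (real Qn)" unfolding sd_def q using mpos by (simp add: real_sqrt_divide)
  have sd: "0 < sd" unfolding sdq using Qpos by simp
  have sd2: "sd\<^sup>2 = 1 / real Qn" unfolding sdq using Qpos by (simp add: power_divide)
  have sqQ: "sqrt (real Qn) \<le> 4 * sqrt (real m)"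
  proof -
    have "sqrt (real Qn) \<le> sqrt (16 * real m)" using QU by (rule real_sqrt_le_mono)
    also have "\<dots> = 4 * sqrt (real m)" by (simp add: real_sqrt_mult)
    finally show ?thesis .
  qed
  have K: "real m / sqrt q * ln (real m) \<ge> 21"
  proof -
    have "sqrt q = sqrt (real m) * sqrt (real Qn)" unfolding q by (simp add: real_sqrt_mult)
    also have "\<dots> \<le> sqrt (real m) * (4 * sqrt (real m))" using sqQ by (intro mult_left_mono) auto
    also have "\<dots> = 4 * real m" using mpos by simp
    finally have sq: "sqrt q \<le> 4 * real m" .
    have sqp: "sqrt q > 0" unfolding q using mpos Qpos by simp
    have "1/4 \<le> real m / sqrt q"
      using sq sqp mpos by (simp add: le_divide_eq)
    from mult_right_mono[OF this, of L] L0 have "1/4 * L \<le> real m / sqrt q * L" by simp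
    then have "L / 4 \<le> real m / sqrt q * L" by simp
    then show ?thesis using L84 unfolding L_def by linarith
  qed
  have m2: "m \<ge> 2" using m5 by simp
  have main: "measure (obs_space m ua ub sd) (space (obs_space m ua ub sd) \<inter> good_event m q)
     \<ge> 1 - 2 * real m * (2 * exp (-1\<^sup>2/(2 * sd\<^sup>2)))
         - real (card (Cgrid m)) * real (m choose 5) * (2*(2 * (1 / real m ^ 3))/sd) ^ 5"
    by (rule fixed_m[OF m2 sd u K])
  have T1: "2 * real m * (2 * exp (-1\<^sup>2/(2 * sd\<^sup>2))) \<le> 4 * real m * exp (- ((ln (real m))^2) / 2)"
  proof -
    have "-1\<^sup>2/(2 * sd\<^sup>2) = - real Qn / 2" unfolding sd2 using Qpos by simp
    also have "\<dots> \<le> - L\<^sup>2 / 2" using QL by simp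
    finally have "exp (-1\<^sup>2/(2 * sd\<^sup>2)) \<le> exp (- L\<^sup>2 / 2)" by simp
    then show ?thesis unfolding L_def using mpos by simp
  qed
  have T2: "real (card (Cgrid m)) * real (m choose 5) * (2*(2 * (1 / real m ^ 3))/sd) ^ 5
      \<le> real m^11 * (16 * sqrt (real m) / real m^3)^5"
  proof -
    have c1: "real (card (Cgrid m)) \<le> real m ^ 6" using card_Cgrid[of m] by (metis of_nat_le_iff of_nat_power)
    have c2: "real (m choose 5) \<le> real m ^ 5" using binomial_le_pow[OF m5] by (metis of_nat_le_iff of_nat_power)
    have "2*(2 * (1 / real m ^ 3))/sd = 4 * sqrt (real Qn) / real m ^ 3" unfolding sdq by simp
    also have "\<dots> \<le> 4 * (4 * sqrt (real m)) / real m ^ 3"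
      using sqQ mpos by (intro divide_right_mono mult_left_mono) auto
    finally have c3: "2*(2 * (1 / real m ^ 3))/sd \<le> 16 * sqrt (real m) / real m ^ 3" by simp
    have c3': "(2*(2 * (1 / real m ^ 3))/sd) ^ 5 \<le> (16 * sqrt (real m) / real m ^ 3) ^ 5"
    proof (rule power_mono[OF c3])
      show "0 \<le> 2*(2 * (1 / real m ^ 3))/sd" using sd by (intro divide_nonneg_nonneg mult_nonneg_nonneg) auto
    qed
    have "real (card (Cgrid m)) * real (m choose 5) * (2*(2 * (1 / real m ^ 3))/sd) ^ 5
        \<le> real m ^ 6 * real m ^ 5 * (16 * sqrt (real m) / real m ^ 3) ^ 5"
    proof -
      have p3: "0 \<le> real m ^ 3 * sd" using sd mpos by (intro mult_nonneg_nonneg) auto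
      have p4: "0 \<le> (2*(2 * (1 / real m ^ 3))/sd) ^ 5" using sd by (intro zero_le_power divide_nonneg_nonneg mult_nonneg_nonneg) auto
      show ?thesis by (intro mult_mono c1 c2 c3' p4) (use p3 in auto)
    qed
    also have "\<dots> = real m^11 * (16 * sqrt (real m) / real m^3)^5" by (simp add: power_add[symmetric])
    finally show ?thesis .
  qed
  interpret PX: prob_space "obs_space m ua ub sd" unfolding obs_eq
    by (rule prob_space_PiM) (simp add: prob_space_normal_density sd)
  have "measure (obs_space m ua ub sd) (space (obs_space m ua ub sd) \<inter> good_event m q) \<le> 1"
    by (rule PX.prob_le_1)
  then show ?thesis using main T1 T2 unfolding sd_def q_def by linarith
qed

theorem lemma9:
  fixes \<Delta> :: "nat \<Rightarrow> real"
    and ua ub :: "nat \<Rightarrow> nat \<Rightarrow> real"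
  assumes "eventually (\<lambda>m. \<Delta> m \<ge> real m powr (1/4) * (ln (real m))\<^sup>2) sequentially"
    and "\<Delta> \<in> o(\<lambda>m. real m / ln (real m))"
    and "eventually (\<lambda>m. \<forall>i<m. 0 \<le> ua m i \<and> ua m i \<le> 1 \<and> 0 \<le> ub m i \<and> ub m i \<le> 1) sequentially"
    and "eventually (\<lambda>m. \<exists>A\<subseteq>{..<m}. envy m (ua m) (ub m) A \<le> - \<Delta> m) sequentially"
  shows "(\<lambda>m. measure (obs_space m (ua m) (ub m) (sqrt (real m / real (nq m (\<Delta> m)))))
                  (space (obs_space m (ua m) (ub m) (sqrt (real m / real (nq m (\<Delta> m)))))
                   \<inter> good_event m (real (nq m (\<Delta> m)))))
         \<longlonglongrightarrow> 1"
proof -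
  define f where "f m = measure (obs_space m (ua m) (ub m) (sqrt (real m / real (nq m (\<Delta> m)))))
                  (space (obs_space m (ua m) (ub m) (sqrt (real m / real (nq m (\<Delta> m)))))
                   \<inter> good_event m (real (nq m (\<Delta> m))))" for m
  define e where "e m = 4 * real m * exp (- ((ln (real m))^2) / 2) + real m^11 * (16 * sqrt (real m) / real m^3)^5" for m :: nat
  have e0: "e \<longlonglongrightarrow> 0" unfolding e_def by real_asymp
  have lo: "(\<lambda>m. 1 - e m) \<longlonglongrightarrow> 1" using tendsto_diff[OF tendsto_const e0, of 1] by simp
  have F1: "eventually (\<lambda>m::nat. 15 * real m / ln (real m) ^ 3 + ln (real m) ^ 2 + 1 \<le> 16 * real m) sequentially"
    by real_asymp
  have F2: "eventually (\<lambda>m::nat. ln (real m) \<ge> 84) sequentially" by real_asymp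
  have ev: "eventually (\<lambda>m. 1 - e m \<le> f m \<and> f m \<le> 1) sequentially"
    using assms(1) assms(3) F1 F2 eventually_ge_at_top[of "5::nat"]
  proof eventually_elim
    case (elim m)
    show ?case using per_m[OF elim(5) elim(4) elim(3) elim(1) elim(2)] unfolding f_def e_def by linarith
  qed
  have "f \<longlonglongrightarrow> 1"
  proof (rule tendsto_sandwich[OF _ _ lo tendsto_const])
    show "eventually (\<lambda>m. 1 - e m \<le> f m) sequentially" using ev by (rule eventually_mono) auto
    show "eventually (\<lambda>m. f m \<le> 1) sequentially" using ev by (rule eventually_mono) auto
  qed
  then show ?thesis unfolding f_def .
qed

end
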